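(* Assume $\int t\,\mathcal{T}(\mathrm{d}t)<\infty$. If $\mathcal{T}^{\mathcal{R}}[\mathrm{id}]\geq\mathcal{T}[\mathrm{id}]$ for all reset laws $\mathcal{R}$, then $\overline{F}(0)=1$.
   Context: Standing assumptions: $\mathcal{T}$ is a probability law on the Borel sets of $[0,\infty]$ with $\mathcal{T}((0,\infty])>0$ and $\inf\mathrm{supp}(\mathcal{T})=0$; $\overline{F}(t):=\mathcal{T}((t,\infty])$; $\mathcal{Q}[\mathrm{id}]:=\int t\,\mathcal{Q}(\mathrm{d}t)$. A reset law is a probability law $\mathcal{R}$ on the Borel sets of $[0,\infty]$ with $\mathcal{R}((0,\infty])>0$ and $\mathcal{R}([0,\infty))>0$. Given a reset law $\mathcal{R}$: let $(T_k)$ be i.i.d. with law $\mathcal{T}$ and $(R_k)$ an independent i.i.d. sequence with law $\mathcal{R}$; $\mathcal{T}^{\mathcal{R}}$ is the law of $\tilde T$ defined a.s. by $\tilde T=R_1+\cdots+R_{k-1}+T_k$ on $\{R_1<T_1,\ldots,R_{k-1}<T_{k-1},T_k\leq R_k\}$, $k\in\mathbb{N}$. *)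

theory Defs
  imports "HOL-Probability.Probability"
begin

text \<open>Laws on the Borel sets of [0,\<infinity>] are modelled as measures on ennreal with Borel sets.\<close>

definition law_on_ext :: "ennreal measure \<Rightarrow> bool" where
  "law_on_ext M \<longleftrightarrow> prob_space M \<and> sets M = sets borel"

definition support :: "ennreal measure \<Rightarrow> ennreal set" where
  "support M = {x. \<forall>U. open U \<and> x \<in> U \<longrightarrow> emeasure M U > 0}"

definition mean :: "ennreal measure \<Rightarrow> ennreal" where
  "mean Q = (\<integral>\<^sup>+ t. t \<partial>Q)"

definition reset_law :: "ennreal measure \<Rightarrow> bool" where
  "reset_law R \<longleftrightarrow> law_on_ext R \<and> emeasure R {0<..} > 0 \<and> emeasure R {..<\<infinity>} > 0"

definition reset_space :: "ennreal measure \<Rightarrow> ennreal measure \<Rightarrow> (nat \<Rightarrow> ennreal \<times> ennreal) measure" where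
  "reset_space T R = (\<Pi>\<^sub>M k\<in>(UNIV::nat set). T \<Otimes>\<^sub>M R)"

text \<open>The reset time: R_0 + ... + R_{k-1} + T_k for the first k with T_k \<le> R_k
  (then R_i < T_i for all i < k); defined arbitrarily (\<infinity>) on the null event where no such k exists.\<close>
definition reset_time :: "(nat \<Rightarrow> ennreal \<times> ennreal) \<Rightarrow> ennreal" where
  "reset_time \<omega> = (if \<exists>k. fst (\<omega> k) \<le> snd (\<omega> k)
     then (let k = (LEAST k. fst (\<omega> k) \<le> snd (\<omega> k)) in (\<Sum>i<k. snd (\<omega> i)) + fst (\<omega> k))
     else \<infinity>)"

definition reset :: "ennreal measure \<Rightarrow> ennreal measure \<Rightarrow> ennreal measure" where
  "reset T R = distr (reset_space T R) borel reset_time"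

end

theory Submission
  imports Defs
begin

lemma reset_time_rec:
  "reset_time \<omega> = (if fst (\<omega> 0) \<le> snd (\<omega> 0) then fst (\<omega> 0)
     else snd (\<omega> 0) + reset_time (\<lambda>n. \<omega> (Suc n)))"
proof (cases "fst (\<omega> 0) \<le> snd (\<omega> 0)")
  case True
  then have "(LEAST k. fst (\<omega> k) \<le> snd (\<omega> k)) = 0" by (simp add: Least_eq_0)
  then show ?thesis using True unfolding reset_time_def by auto
next
  case False
  show ?thesis
  proof (cases "\<exists>k. fst (\<omega> k) \<le> snd (\<omega> k)")
    case True
    then obtain k where k: "fst (\<omega> k) \<le> snd (\<omega> k)" by auto
    have ex2: "\<exists>k. fst (\<omega> (Suc k)) \<le> snd (\<omega> (Suc k))"
      using k False by (cases k) auto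
    have L: "(LEAST k. fst (\<omega> k) \<le> snd (\<omega> k)) = Suc (LEAST m. fst (\<omega> (Suc m)) \<le> snd (\<omega> (Suc m)))"
      by (rule Least_Suc[OF k False])
    show ?thesis using True False ex2 unfolding reset_time_def Let_def L
      by (simp del: sum.lessThan_Suc add: sum.lessThan_Suc_shift add.assoc)
  next
    case nex: False
    then have "\<not> (\<exists>k. fst (\<omega> (Suc k)) \<le> snd (\<omega> (Suc k)))" by auto
    then show ?thesis using nex False unfolding reset_time_def by simp
  qed
qed

fun ft :: "nat \<Rightarrow> (ennreal \<times> ennreal) stream \<Rightarrow> ennreal" where
  "ft 0 s = 0"
| "ft (Suc n) s = (if fst (shd s) \<le> snd (shd s) then fst (shd s) else snd (shd s) + ft n (stl s))"

lemma reset_time_stream: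
  "reset_time (\<lambda>n. s !! n) = (if fst (shd s) \<le> snd (shd s) then fst (shd s)
     else snd (shd s) + reset_time (\<lambda>n. stl s !! n))"
  by (subst reset_time_rec) simp

lemma ft_eq: "(\<exists>k<n. fst (s !! k) \<le> snd (s !! k)) \<Longrightarrow> ft n s = reset_time (\<lambda>k. s !! k)"
proof (induction n arbitrary: s)
  case 0 then show ?case by simp
next
  case (Suc n)
  show ?case
  proof (cases "fst (shd s) \<le> snd (shd s)")
    case True then show ?thesis by (subst reset_time_stream) simp
  next
    case False
    from Suc.prems obtain k where k: "k < Suc n" "fst (s !! k) \<le> snd (s !! k)" by auto
    with False obtain j where j: "k = Suc j" by (cases k) auto
    have "ft n (stl s) = reset_time (\<lambda>k. stl s !! k)"
      using k j by (intro Suc.IH) auto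
    then show ?thesis using False by (subst reset_time_stream) simp
  qed
qed

lemma ft_mono: "ft n s \<le> ft (Suc n) s"
proof (induction n arbitrary: s)
  case 0 then show ?case by simp
next
  case (Suc n)
  then show ?case by (auto intro: add_left_mono)
qed

abbreviation BB :: "(ennreal \<times> ennreal) measure" where "BB \<equiv> borel \<Otimes>\<^sub>M borel"

lemma ft_meas[measurable]: "ft n \<in> borel_measurable (stream_space BB)"
proof (induction n)
  case 0 then show ?case by simp
next
  case (Suc n)
  note [measurable] = Suc
  show ?case by (simp only: ft.simps) measurable
qed

lemma reset_time_meas[measurable]: "reset_time \<in> borel_measurable (\<Pi>\<^sub>M i\<in>UNIV. BB)"
  unfolding reset_time_def Let_def by measurable

lemma F_meas[measurable]: "(\<lambda>s. reset_time (\<lambda>n. s !! n)) \<in> borel_measurable (stream_space BB)"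
  using measurable_comp[OF measurable_snth_PiM reset_time_meas] by (simp add: comp_def)

definition gR :: "bool \<Rightarrow> ennreal" where "gR b = (if b then 0 else \<infinity>)"

definition RR :: "ennreal measure" where
  "RR = distr (measure_pmf (bernoulli_pmf (1/2))) borel gR"

lemma RR_int: "(\<integral>\<^sup>+r. f r \<partial>RR) = f 0 * ennreal (1/2) + f \<infinity> * ennreal (1/2)"
  if "f \<in> borel_measurable borel" for f
  unfolding RR_def using that
  by (subst nn_integral_distr) (auto simp: gR_def)

lemma RR_law: "reset_law RR"
proof -
  have h: "(0::ennreal) < ennreal (1/2)" by (simp only: ennreal_less_zero_iff)
  have p: "prob_space RR" unfolding RR_def
    by (rule prob_space.prob_space_distr) (auto simp: prob_space_measure_pmf)
  have "emeasure RR {0<..} = emeasure (measure_pmf (bernoulli_pmf (1/2))) {False}"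
    unfolding RR_def by (subst emeasure_distr) (auto simp: gR_def intro!: arg_cong2[where f=emeasure])
  also have "\<dots> = ennreal (1/2)" by (simp add: emeasure_pmf_single)
  finally have a: "emeasure RR {0<..} > 0" using h by simp
  have "emeasure RR {..<\<infinity>} = emeasure (measure_pmf (bernoulli_pmf (1/2))) {True}"
    unfolding RR_def by (subst emeasure_distr) (auto simp: gR_def split: if_splits intro!: arg_cong2[where f=emeasure])
  also have "\<dots> = ennreal (1/2)" by (simp add: emeasure_pmf_single)
  finally have b: "emeasure RR {..<\<infinity>} > 0" using h by simp
  show ?thesis unfolding reset_law_def law_on_ext_def using p a b by (simp add: RR_def)
qed

lemma all_snth_Stream: "(\<forall>k. P ((x ## X) !! k)) \<longleftrightarrow> P x \<and> (\<forall>k. P (X !! k))"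
proof
  assume a: "\<forall>k. P ((x ## X) !! k)"
  have "P ((x ## X) !! 0)" using a by blast
  moreover have "\<And>k. P ((x ## X) !! Suc k)" using a by blast
  ultimately show "P x \<and> (\<forall>k. P (X !! k))" by simp
next
  assume a: "P x \<and> (\<forall>k. P (X !! k))"
  show "\<forall>k. P ((x ## X) !! k)"
  proof
    fix k show "P ((x ## X) !! k)" using a by (cases k) auto
  qed
qed

theorem mainTheorem14:
  fixes T :: "ennreal measure"
  assumes "law_on_ext T"
    and "emeasure T {0<..} > 0"
    and "Inf (support T) = 0"
    and "mean T < \<infinity>"
    and "\<And>R. reset_law R \<Longrightarrow> mean (reset T R) \<ge> mean T"
  shows "emeasure T {0<..} = 1"
proof (rule ccontr)
  assume neq: "emeasure T {0<..} \<noteq> 1"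
  have pT: "prob_space T" and sT: "sets T = sets borel" using assms(1) by (auto simp: law_on_ext_def)
  have pR: "prob_space RR" and sR: "sets RR = sets borel" using RR_law by (auto simp: reset_law_def law_on_ext_def)
  interpret T: prob_space T by (rule pT)
  interpret RR: prob_space RR by (rule pR)
  interpret PP: pair_prob_space T RR ..
  define \<mu> where "\<mu> = T \<Otimes>\<^sub>M RR"
  interpret mu: prob_space \<mu> unfolding \<mu>_def by (rule PP.prob_space_axioms)
  have spT: "space T = UNIV" using sets_eq_imp_space_eq[OF sT] by simp
  have spR: "space RR = UNIV" using sets_eq_imp_space_eq[OF sR] by simp
  have smu: "sets \<mu> = sets BB" using sets_pair_measure_cong[OF sT sR] unfolding \<mu>_def by simp
  have spmu: "space \<mu> = UNIV" unfolding \<mu>_def by (simp add: space_pair_measure spT spR)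
  define S where "S = stream_space \<mu>"
  interpret S: prob_space S unfolding S_def by (rule mu.prob_space_stream_space)
  have sS: "sets S = sets (stream_space BB)" unfolding S_def by (rule sets_stream_space_cong[OF smu])
  have spS: "space S = UNIV" unfolding S_def by (simp add: space_stream_space spmu)
  define P where "P = reset_space T RR"
  have sP: "sets P = sets (\<Pi>\<^sub>M i\<in>(UNIV::nat set). BB)"
    unfolding P_def reset_space_def using smu unfolding \<mu>_def by (intro sets_PiM_cong) auto
  define F where "F = (\<lambda>s. reset_time (\<lambda>n. s !! n))"
  have Fm: "F \<in> borel_measurable S" unfolding F_def using F_meas measurable_cong_sets[OF sS refl] by blast
  have ftm: "\<And>n. ft n \<in> borel_measurable S" using ft_meas measurable_cong_sets[OF sS refl] by blast
  have rtm: "reset_time \<in> borel_measurable P" using reset_time_meas measurable_cong_sets[OF sP refl] by blast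
  have tsm: "to_stream \<in> measurable P S"
    using measurable_to_stream[of \<mu>] unfolding S_def P_def reset_space_def \<mu>_def by simp

  define E where "E = mean T"
  define U where "U = emeasure T {0<..}"
  define e where "e = enn2real E"
  define v where "v = enn2real U"
  have Efin: "E = ennreal e" "e \<ge> 0" using assms(4) unfolding E_def e_def
    by (auto simp: ennreal_enn2real_if)
  have U1: "U \<le> 1" unfolding U_def by (rule T.emeasure_le_1)
  have Uv: "U = ennreal v" "v \<ge> 0" using U1 unfolding v_def by (auto simp: ennreal_enn2real_if top_unique)
  have v1: "v < 1"
  proof (rule ccontr)
    assume "\<not> v < 1"
    then have "U \<ge> 1" using Uv by (simp add: ennreal_1[symmetric] del: ennreal_1)
    with U1 neq show False unfolding U_def by auto
  qed
  have Epos: "e > 0"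
  proof (rule ccontr)
    assume "\<not> e > 0"
    then have "E = 0" using Efin by simp
    then have "AE t in T. t = 0" unfolding E_def mean_def
      by (subst (asm) nn_integral_0_iff_AE) (auto simp: measurable_cong_sets[OF sT refl])
    then have "emeasure T {0<..} = 0"
      by (subst (asm) AE_iff_measurable[of "{0<..}"]) (auto simp: sT spT zero_less_iff_neq_zero)
    with assms(2) show False by simp
  qed
  define c where "c = ennreal (e / (2 - v))"

  have minm: "(\<lambda>x. min (fst x) (snd x)) \<in> borel_measurable \<mu>"
  proof -
    have "(\<lambda>x::ennreal\<times>ennreal. min (fst x) (snd x)) \<in> borel_measurable BB" by measurable
    then show ?thesis using measurable_cong_sets[OF smu refl] by blast
  qed
  have indm: "(\<lambda>x. indicator {x. snd x < fst x} x :: ennreal) \<in> borel_measurable \<mu>"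
  proof -
    have "(\<lambda>x::ennreal\<times>ennreal. indicator {x. snd x < fst x} x :: ennreal) \<in> borel_measurable BB" by measurable
    then show ?thesis using measurable_cong_sets[OF smu refl] by blast
  qed
  have a: "(\<integral>\<^sup>+x. min (fst x) (snd x) \<partial>\<mu>) = E * ennreal (1/2)"
  proof -
    have "(\<integral>\<^sup>+x. min (fst x) (snd x) \<partial>\<mu>) = (\<integral>\<^sup>+t. \<integral>\<^sup>+r. min t r \<partial>RR \<partial>T)"
      using RR.nn_integral_fst[where f="\<lambda>x. min (fst x) (snd x)"] minm unfolding \<mu>_def by simp
    also have "\<dots> = (\<integral>\<^sup>+t. t * ennreal (1/2) \<partial>T)"
      by (rule nn_integral_cong) (simp add: RR_int)
    also have "\<dots> = E * ennreal (1/2)" unfolding E_def mean_def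
      by (rule nn_integral_multc) (simp add: measurable_cong_sets[OF sT refl])
    finally show ?thesis .
  qed
  have b: "(\<integral>\<^sup>+x. indicator {x. snd x < fst x} x \<partial>\<mu>) = U * ennreal (1/2)"
  proof -
    have "(\<integral>\<^sup>+x. indicator {x. snd x < fst x} x \<partial>\<mu>) = (\<integral>\<^sup>+t. \<integral>\<^sup>+r. indicator {x. snd x < fst x} (t, r) \<partial>RR \<partial>T)"
      using RR.nn_integral_fst[where f="\<lambda>x. indicator {x. snd x < fst x} x"] indm unfolding \<mu>_def by simp
    also have "\<dots> = (\<integral>\<^sup>+t. indicator {0<..} t * ennreal (1/2) \<partial>T)"
      by (rule nn_integral_cong) (subst RR_int, auto simp: split: split_indicator)
    also have "\<dots> = U * ennreal (1/2)" unfolding U_def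
      by (subst nn_integral_multc) (auto simp: sT measurable_cong_sets[OF sT refl])
    finally show ?thesis .
  qed
  have fix_c: "E * ennreal (1/2) + c * (U * ennreal (1/2)) = c"
  proof -
    have "E * ennreal (1/2) + c * (U * ennreal (1/2)) = ennreal (e * (1/2) + e / (2 - v) * (v * (1/2)))"
    proof -
      have n1: "0 \<le> e * (1/2)" "0 \<le> e / (2 - v) * (v * (1/2))" "0 \<le> e / (2 - v)" "0 \<le> v * (1/2)" "0 \<le> (1/2::real)"
        using Efin Uv v1 by auto
      show ?thesis unfolding c_def Efin Uv
        using n1 Efin(2) Uv(2) by (simp only: ennreal_plus ennreal_mult)
    qed
    also have "e * (1/2) + e / (2 - v) * (v * (1/2)) = e / (2 - v)" using v1 by (simp add: field_simps)
    finally show ?thesis unfolding c_def .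
  qed

  have ftb: "(\<integral>\<^sup>+s. ft n s \<partial>S) \<le> c" for n
  proof (induction n)
    case 0 then show ?case by simp
  next
    case (Suc n)
    have inner: "(\<integral>\<^sup>+X. ft (Suc n) (x ## X) \<partial>S) \<le> min (fst x) (snd x) + c * indicator {x. snd x < fst x} x" for x
    proof (cases "fst x \<le> snd x")
      case True
      then have "(\<integral>\<^sup>+X. ft (Suc n) (x ## X) \<partial>S) = (\<integral>\<^sup>+X. fst x \<partial>S)" by simp
      also have "\<dots> = fst x" by (simp add: S.emeasure_space_1)
      finally show ?thesis using True by (simp add: min_def)
    next
      case False
      then have "(\<integral>\<^sup>+X. ft (Suc n) (x ## X) \<partial>S) = (\<integral>\<^sup>+X. snd x + ft n X \<partial>S)" by simp
      also have "\<dots> = snd x + (\<integral>\<^sup>+X. ft n X \<partial>S)"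
        by (subst nn_integral_add) (auto simp: ftm S.emeasure_space_1)
      also have "\<dots> \<le> snd x + c" using Suc by (rule add_left_mono)
      finally have calc: "(\<integral>\<^sup>+X. ft (Suc n) (x ## X) \<partial>S) \<le> snd x + c" .
      have eqm: "min (fst x) (snd x) + c * indicator {x. snd x < fst x} x = snd x + c"
        using False by (auto simp add: min_def indicator_def not_le)
      show ?thesis using calc by (simp only: eqm)
    qed
    have "(\<integral>\<^sup>+s. ft (Suc n) s \<partial>S) = (\<integral>\<^sup>+x. (\<integral>\<^sup>+X. ft (Suc n) (x ## X) \<partial>S) \<partial>\<mu>)"
      unfolding S_def by (rule mu.nn_integral_stream_space) (use ftm[of "Suc n"] in \<open>simp only: S_def\<close>)
    also have "\<dots> \<le> (\<integral>\<^sup>+x. min (fst x) (snd x) + c * indicator {x. snd x < fst x} x \<partial>\<mu>)"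
      by (rule nn_integral_mono) (rule inner)
    also have "\<dots> = (\<integral>\<^sup>+x. min (fst x) (snd x) \<partial>\<mu>) + c * (\<integral>\<^sup>+x. indicator {x. snd x < fst x} x \<partial>\<mu>)"
      by (subst nn_integral_add) (auto simp: minm indm nn_integral_cmult intro!: borel_measurable_times_ennreal)
    also have "\<dots> = c" using a b fix_c by simp
    finally show ?case .
  qed

  define NS where "NS = {s::(ennreal \<times> ennreal) stream. \<forall>k. snd (s !! k) < fst (s !! k)}"
  have NSm: "NS \<in> sets S"
  proof -
    have "Measurable.pred (stream_space BB) (\<lambda>s. \<forall>k. snd (s !! k) < fst (s !! k))" by measurable
    then have "{s \<in> space (stream_space BB). \<forall>k. snd (s !! k) < fst (s !! k)} \<in> sets (stream_space BB)" by simp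
    moreover have "{s \<in> space (stream_space BB). \<forall>k. snd (s !! k) < fst (s !! k)} = NS"
      using sets_eq_imp_space_eq[OF sS] spS unfolding NS_def by auto
    ultimately show ?thesis using sS by simp
  qed
  have NS0: "emeasure S NS = 0"
  proof -
    have "emeasure S NS = (\<integral>\<^sup>+X. indicator NS X \<partial>S)" using NSm by simp
    also have "\<dots> = (\<integral>\<^sup>+x. (\<integral>\<^sup>+X. indicator NS (x ## X) \<partial>S) \<partial>\<mu>)"
      unfolding S_def by (rule mu.nn_integral_stream_space) (use NSm S_def in simp)
    also have "\<dots> = (\<integral>\<^sup>+x. indicator {x. snd x < fst x} x * emeasure S NS \<partial>\<mu>)"
    proof (rule nn_integral_cong)
      fix x
      have "(\<lambda>X. indicator NS (x ## X) :: ennreal) = (\<lambda>X. indicator {x. snd x < fst x} x * indicator NS X)"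
        by (rule ext) (auto simp: NS_def all_snth_Stream[where P="\<lambda>y. snd y < fst y"] split: split_indicator)
      then show "(\<integral>\<^sup>+X. indicator NS (x ## X) \<partial>S) = indicator {x. snd x < fst x} x * emeasure S NS"
        using NSm by (simp add: nn_integral_cmult)
    qed
    also have "\<dots> = U * ennreal (1/2) * emeasure S NS"
      using b by (subst nn_integral_multc) (auto simp: indm)
    finally have eq: "emeasure S NS = U * ennreal (1/2) * emeasure S NS" .
    define w where "w = measure S NS"
    have w: "emeasure S NS = ennreal w" "w \<ge> 0" unfolding w_def by (auto simp: S.emeasure_eq_measure)
    have n2: "0 \<le> v * (1/2)" "0 \<le> (1/2::real)" using Uv by auto
    have m2: "ennreal (v * (1/2) * w) = ennreal v * ennreal (1/2) * ennreal w"
      using n2 w(2) Uv(2) by (simp only: ennreal_mult)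
    have "ennreal w = ennreal (v * (1/2) * w)" using eq unfolding w Uv m2 .
    then have "w = v * (1/2) * w" using w Uv by (subst (asm) ennreal_inj) auto
    then have "w * (1 - v/2) = 0" by (simp add: algebra_simps)
    then have "w = 0" using v1 by auto
    then show ?thesis using w by simp
  qed
  have AEN: "AE s in S. s \<notin> NS"
    by (rule AE_I'[of NS]) (auto simp: null_sets_def NSm NS0)

  have mean_eq: "mean (reset T RR) = (\<integral>\<^sup>+s. F s \<partial>S)"
  proof -
    have "mean (reset T RR) = (\<integral>\<^sup>+\<omega>. reset_time \<omega> \<partial>P)"
      unfolding mean_def reset_def P_def[symmetric] by (subst nn_integral_distr) (auto simp: rtm)
    also have "\<dots> = (\<integral>\<^sup>+\<omega>. F (to_stream \<omega>) \<partial>P)"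
    proof (rule nn_integral_cong)
      fix x :: "nat \<Rightarrow> ennreal \<times> ennreal"
      have sn: "(\<lambda>n. smap x nats !! n) = x" by (rule ext) (simp add: Suc_funpow)
      show "reset_time x = F (to_stream x)" unfolding F_def to_stream_def sn ..
    qed
    also have "\<dots> = (\<integral>\<^sup>+s. F s \<partial>distr P S to_stream)"
      by (subst nn_integral_distr) (auto simp: tsm Fm)
    also have "distr P S to_stream = S"
      unfolding S_def P_def reset_space_def \<mu>_def by (rule stream_space_eq_distr[symmetric])
    finally show ?thesis .
  qed
  have "(\<integral>\<^sup>+s. F s \<partial>S) \<le> (\<integral>\<^sup>+s. (SUP n. ft n s) \<partial>S)"
  proof (rule nn_integral_mono_AE)
    show "AE s in S. F s \<le> (SUP n. ft n s)"
      using AEN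
    proof (rule AE_mp, intro AE_I2 impI)
      fix s assume "s \<notin> NS"
      then obtain k where k: "fst (s !! k) \<le> snd (s !! k)" unfolding NS_def by (auto simp: not_less)
      have "F s = ft (Suc k) s" unfolding F_def using k by (intro ft_eq[symmetric]) auto
      also have "\<dots> \<le> (SUP n. ft n s)" by (rule SUP_upper) simp
      finally show "F s \<le> (SUP n. ft n s)" .
    qed
  qed
  also have "\<dots> = (SUP n. (\<integral>\<^sup>+s. ft n s \<partial>S))"
    by (rule nn_integral_monotone_convergence_SUP)
       (auto intro!: incseq_SucI le_funI ft_mono ftm simp del: ft.simps)
  also have "\<dots> \<le> c" by (rule SUP_least) (rule ftb)
  finally have "mean (reset T RR) \<le> c" using mean_eq by simp
  moreover have "c < E"
  proof -
    have "e / (2 - v) < e" using Epos v1 Uv by (simp add: divide_less_eq)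
    then show ?thesis unfolding c_def Efin using Epos by (intro ennreal_lessI) auto
  qed
  moreover have "mean (reset T RR) \<ge> E" unfolding E_def by (rule assms(5)[OF RR_law])
  ultimately show False by simp
qed

end
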